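(* Let $M=M_n\to\infty$ as $n\to\infty$. Assume that (i) $\psi(p_1,\dots,p_r)=\sum_{j=1}^r w_j\varphi(p_j)$ with weights $w_j>0$, where $\varphi$ is decreasing, non-negative on $(0,1/2)$, and one-to-one from $(0,1)$ to $(-\infty,\infty)$; (ii) $W_{n,M_n}^{[0]}$ diverges to infinity in probability; (iii) for every $j\in\{1,\dots,r\}$, the bootstrap replicates $T_{n,j}^{[1]},\dots,T_{n,j}^{[M_n]}$ contain no ties. Then $p_{n,M_n}(W_{n,M_n}^{[0]})\to0$ in probability.
   Context: Setting: Let $\mathbf{X}_n$ denote the available data. For $j\in\{1,\dots,r\}$, let $T_{n,j}=T_{n,j}(\mathbf{X}_n)$ be real-valued test statistics and $\mathbf{T}_n=(T_{n,1},\dots,T_{n,r})$. Let $\mathbf{V}_n^{[1]},\mathbf{V}_n^{[2]},\dots$ be i.i.d. random vectors representing the additional randomness of a resampling mechanism and $\mathbf{T}_n^{[i]}=(T_{n,1}^{[i]},\dots,T_{n,r}^{[i]})=\mathbf{T}_n^{[i]}(\mathbf{X}_n,\mathbf{V}_n^{[i]})$, $i\ge1$, bootstrap replicates of $\mathbf{T}_n$; $\mathbf{T}_n^{[0]}=\mathbf{T}_n$. For an integer $M$, $i\in\{0,\dots,M\}$, $j\in\{1,\dots,r\}$: $p_{n,M}(T_{n,j}^{[i]})=\frac{1}{M+1}\{\frac12+\sum_{k=1}^M\mathbf{1}(T_{n,j}^{[k]}\ge T_{n,j}^{[i]})\}$, $W_{n,M}^{[i]}=\psi\{p_{n,M}(T_{n,1}^{[i]}),\dots,p_{n,M}(T_{n,r}^{[i]})\}$,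 and $p_{n,M}(W_{n,M}^{[0]})=\frac1M\sum_{k=1}^M\mathbf{1}(W_{n,M}^{[k]}\ge W_{n,M}^{[0]})$. *)

theory Defs
  imports "HOL-Probability.Probability"
begin

definition pval :: "nat \<Rightarrow> (nat \<Rightarrow> real) \<Rightarrow> real \<Rightarrow> real" where
  "pval M t x = (1/2 + real (card {k \<in> {1..M}. x \<le> t k})) / (real M + 1)"

text \<open>Combined statistic W^{[i]} = psi(p(T_1^{[i]}), ..., p(T_r^{[i]})).  T i j is T_j^{[i]}
  (i = 0 original, i = 1..M bootstrap); the p-vector is passed as a function of j in 1..r.\<close>
definition Wstat :: "nat \<Rightarrow> ((nat \<Rightarrow> real) \<Rightarrow> real) \<Rightarrow> (nat \<Rightarrow> nat \<Rightarrow> real) \<Rightarrow> nat \<Rightarrow> real" where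
  "Wstat M psi T i = psi (\<lambda>j. pval M (\<lambda>k. T k j) (T i j))"

definition pW :: "nat \<Rightarrow> ((nat \<Rightarrow> real) \<Rightarrow> real) \<Rightarrow> (nat \<Rightarrow> nat \<Rightarrow> real) \<Rightarrow> real" where
  "pW M psi T = real (card {k \<in> {1..M}. Wstat M psi T 0 \<le> Wstat M psi T k}) / real M"

text \<open>All statistics as functions of the sample point: index i = 0 is the original
  statistic T_{n,j}(X_n), i >= 1 the bootstrap replicate T_{n,j}^{[i]}(X_n, V_n^{[i]}).\<close>
definition allT :: "(nat \<Rightarrow> nat \<Rightarrow> 'x \<Rightarrow> real) \<Rightarrow> (nat \<Rightarrow> nat \<Rightarrow> 'x \<Rightarrow> 'v \<Rightarrow> real)
    \<Rightarrow> (nat \<Rightarrow> 'a \<Rightarrow> 'x) \<Rightarrow> (nat \<Rightarrow> nat \<Rightarrow> 'a \<Rightarrow> 'v) \<Rightarrow> nat \<Rightarrow> 'a \<Rightarrow> nat \<Rightarrow> nat \<Rightarrow> real" where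
  "allT T Tb X V n \<omega> i j = (if i = 0 then T n j (X n \<omega>) else Tb n j (X n \<omega>) (V n i \<omega>))"

end

theory Submission
  imports Defs
begin

lemma count_small:
  fixes t :: "nat \<Rightarrow> real" and q :: real
  assumes "q \<ge> 0"
  shows "real (card {k\<in>{1..M}. pval M t (t k) \<le> q}) \<le> q * (real M + 1)"
proof (cases "{k\<in>{1..M}. pval M t (t k) \<le> q} = {}")
  case True
  then show ?thesis using assms by (simp only: card.empty) simp
next
  case False
  define S where "S = {k\<in>{1..M}. pval M t (t k) \<le> q}"
  have fin: "finite S" unfolding S_def by simp
  have ne: "S \<noteq> {}" using False S_def by simp
  have "Min (t ` S) \<in> t ` S" using fin ne by simp
  then obtain k0 where k0: "k0 \<in> S" "t k0 = Min (t ` S)" by auto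
  have sub: "S \<subseteq> {l\<in>{1..M}. t k0 \<le> t l}"
  proof
    fix x assume x: "x \<in> S"
    hence "Min (t ` S) \<le> t x" using fin by simp
    thus "x \<in> {l\<in>{1..M}. t k0 \<le> t l}" using x k0 unfolding S_def by auto
  qed
  have "card S \<le> card {l\<in>{1..M}. t k0 \<le> t l}"
    by (rule card_mono[OF _ sub]) simp
  moreover have "pval M t (t k0) \<le> q" using k0 S_def by simp
  hence "(1/2 + real (card {l\<in>{1..M}. t k0 \<le> t l})) \<le> q * (real M + 1)"
    unfolding pval_def by (simp add: divide_le_eq add_pos_nonneg)
  ultimately show ?thesis unfolding S_def[symmetric] by linarith
qed

lemma pval_range:
  fixes t :: "nat \<Rightarrow> real"
  shows "pval M t x \<in> {0<..<1}"
proof -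
  have "card {k \<in> {1..M}. x \<le> t k} \<le> card {1..M}" by (rule card_mono) auto
  hence "real (card {k \<in> {1..M}. x \<le> t k}) \<le> real M" by simp
  thus ?thesis unfolding pval_def by (auto simp: divide_less_eq)
qed

lemma pW_bound:
  fixes t :: "nat \<Rightarrow> nat \<Rightarrow> real" and psi :: "(nat \<Rightarrow> real) \<Rightarrow> real"
  assumes psi_def: "\<And>p. psi p = (\<Sum>j = 1..r. w j * phi (p j))"
    and w_pos: "\<And>j. j \<in> {1..r} \<Longrightarrow> w j > 0"
    and phi_decr: "\<And>x y. x \<in> {0<..<1} \<Longrightarrow> y \<in> {0<..<1} \<Longrightarrow> x \<le> y \<Longrightarrow> phi y \<le> phi x"
    and d: "\<delta> \<in> {0<..<1}"
    and C: "(\<Sum>j = 1..r. w j * phi \<delta>) \<le> C"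
    and W0: "Wstat M psi t 0 > C"
  shows "pW M psi t \<le> 2 * real r * \<delta>"
proof -
  define A where "A = {k \<in> {1..M}. Wstat M psi t 0 \<le> Wstat M psi t k}"
  define B where "B = (\<lambda>j. {k\<in>{1..M}. pval M (\<lambda>k. t k j) (t k j) \<le> \<delta>})"
  have sub: "A \<subseteq> (\<Union>j\<in>{1..r}. B j)"
  proof
    fix k assume k: "k \<in> A"
    show "k \<in> (\<Union>j\<in>{1..r}. B j)"
    proof (rule ccontr)
      assume "k \<notin> (\<Union>j\<in>{1..r}. B j)"
      hence gt: "\<And>j. j \<in> {1..r} \<Longrightarrow> pval M (\<lambda>k. t k j) (t k j) > \<delta>"
        using k unfolding A_def B_def by force
      have "Wstat M psi t k = (\<Sum>j = 1..r. w j * phi (pval M (\<lambda>k. t k j) (t k j)))"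
        unfolding Wstat_def psi_def ..
      also have "\<dots> \<le> (\<Sum>j = 1..r. w j * phi \<delta>)"
      proof (rule sum_mono)
        fix j assume j: "j \<in> {1..r}"
        have "phi (pval M (\<lambda>k. t k j) (t k j)) \<le> phi \<delta>"
          using phi_decr[OF d pval_range] gt[OF j] by simp
        thus "w j * phi (pval M (\<lambda>k. t k j) (t k j)) \<le> w j * phi \<delta>"
          using w_pos[OF j] by simp
      qed
      finally show False using C W0 k unfolding A_def by simp
    qed
  qed
  have "card A \<le> card (\<Union>j\<in>{1..r}. B j)"
    by (rule card_mono[OF _ sub]) (auto simp: B_def)
  also have "\<dots> \<le> (\<Sum>j\<in>{1..r}. card (B j))" by (rule card_UN_le) simp
  finally have "real (card A) \<le> (\<Sum>j\<in>{1..r}. real (card (B j)))"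
    by (metis of_nat_le_iff of_nat_sum)
  also have "\<dots> \<le> (\<Sum>j\<in>{1..r}. \<delta> * (real M + 1))"
    by (rule sum_mono) (use count_small d in \<open>auto simp: B_def\<close>)
  finally have cA: "real (card A) \<le> real r * \<delta> * (real M + 1)" by simp
  show ?thesis
  proof (cases "M = 0")
    case True
    then show ?thesis using d unfolding pW_def by simp
  next
    case False
    hence "real M + 1 \<le> 2 * real M" by simp
    hence "real r * \<delta> * (real M + 1) \<le> real r * \<delta> * (2 * real M)"
      using d by (intro mult_left_mono) auto
    hence "real (card A) \<le> 2 * real r * \<delta> * real M" using cA by simp
    thus ?thesis using False unfolding pW_def A_def[symmetric]
      by (simp add: divide_le_eq)
  qed
qed

lemma card_filter_real:
  "real (card {k\<in>{1..M::nat}. Q k}) = (\<Sum>k\<in>{1..M}. if Q k then 1 else 0)"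
proof -
  have "real (card {k\<in>{1..M::nat}. Q k}) = (\<Sum>k\<in>{k\<in>{1..M}. Q k}. 1)" by simp
  also have "\<dots> = (\<Sum>k\<in>{1..M}. if Q k then 1 else 0)" by (rule sum.inter_filter) simp
  finally show ?thesis .
qed

lemma phi_pval_meas:
  fixes f :: "'a \<Rightarrow> nat \<Rightarrow> real"
  assumes f: "\<And>k. (\<lambda>\<omega>. f \<omega> k) \<in> borel_measurable P"
    and x: "x \<in> borel_measurable P"
  shows "(\<lambda>\<omega>. phi (pval M (f \<omega>) (x \<omega>))) \<in> borel_measurable P"
proof -
  define h where "h = (\<lambda>\<omega>. pval M (f \<omega>) (x \<omega>))"
  have h_eq: "h = (\<lambda>\<omega>. (1/2 + (\<Sum>k\<in>{1..M}. if x \<omega> \<le> f \<omega> k then 1 else 0)) / (real M + 1))"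
    unfolding h_def pval_def card_filter_real ..
  have hm: "h \<in> borel_measurable P"
    unfolding h_eq using f x by measurable
  have "h ` space P \<subseteq> (\<lambda>m. (1/2 + real m) / (real M + 1)) ` {0..M}"
  proof
    fix y assume "y \<in> h ` space P"
    then obtain \<omega> where y: "y = h \<omega>" by auto
    have "card {k \<in> {1..M}. x \<omega> \<le> f \<omega> k} \<le> card {1..M}" by (rule card_mono) auto
    thus "y \<in> (\<lambda>m. (1/2 + real m) / (real M + 1)) ` {0..M}"
      unfolding y h_def pval_def by auto
  qed
  hence "finite (h ` space P)" by (rule finite_subset) simp
  hence "simple_function P h" using hm by (rule simple_function_borel_measurable[rotated])
  hence "simple_function P (phi \<circ> h)" by simp
  hence "phi \<circ> h \<in> borel_measurable P" by (rule borel_measurable_simple_function)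
  thus ?thesis by (simp add: h_def comp_def)
qed

theorem mainTheorem8:
  fixes P :: "'a measure" and SV :: "'v measure"
    and X :: "nat \<Rightarrow> 'a \<Rightarrow> 'x" and V :: "nat \<Rightarrow> nat \<Rightarrow> 'a \<Rightarrow> 'v"
    and T :: "nat \<Rightarrow> nat \<Rightarrow> 'x \<Rightarrow> real" and Tb :: "nat \<Rightarrow> nat \<Rightarrow> 'x \<Rightarrow> 'v \<Rightarrow> real"
    and r :: nat and Mn :: "nat \<Rightarrow> nat"
    and psi :: "(nat \<Rightarrow> real) \<Rightarrow> real" and w :: "nat \<Rightarrow> real" and phi :: "real \<Rightarrow> real"
  assumes P: "prob_space P"
    and V_meas: "\<And>n i. V n i \<in> measurable P SV"
    and V_indep: "\<And>n. prob_space.indep_vars P (\<lambda>i. SV) (V n) {1..}"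
    and V_ident: "\<And>n i. i \<ge> 1 \<Longrightarrow> distr P SV (V n i) = distr P SV (V n 1)"
    and T_meas: "\<And>n j. (\<lambda>\<omega>. T n j (X n \<omega>)) \<in> borel_measurable P"
    and Tb_meas: "\<And>n i j. (\<lambda>\<omega>. Tb n j (X n \<omega>) (V n i \<omega>)) \<in> borel_measurable P"
    and Mn_lim: "filterlim Mn at_top sequentially"
    and psi_def: "\<And>p. psi p = (\<Sum>j = 1..r. w j * phi (p j))"
    and w_pos: "\<And>j. j \<in> {1..r} \<Longrightarrow> w j > 0"
    and phi_decr: "\<And>x y. x \<in> {0<..<1} \<Longrightarrow> y \<in> {0<..<1} \<Longrightarrow> x \<le> y \<Longrightarrow> phi y \<le> phi x"
    and phi_nonneg: "\<And>x. x \<in> {0<..<1/2} \<Longrightarrow> phi x \<ge> 0"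
    and phi_bij: "bij_betw phi {0<..<1} UNIV"
    and W_div: "\<And>C. (\<lambda>n. measure P {\<omega> \<in> space P.
                   Wstat (Mn n) psi (allT T Tb X V n \<omega>) 0 \<le> C}) \<longlonglongrightarrow> 0"
    and no_ties: "\<And>n j. j \<in> {1..r} \<Longrightarrow> AE \<omega> in P. \<forall>k \<in> {1..Mn n}. \<forall>l \<in> {1..Mn n}.
                   k \<noteq> l \<longrightarrow> Tb n j (X n \<omega>) (V n k \<omega>) \<noteq> Tb n j (X n \<omega>) (V n l \<omega>)"
  shows "\<And>\<epsilon>. \<epsilon> > 0 \<Longrightarrow> (\<lambda>n. measure P {\<omega> \<in> space P.
                   \<bar>pW (Mn n) psi (allT T Tb X V n \<omega>)\<bar> > \<epsilon>}) \<longlonglongrightarrow> 0"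
proof -
  fix \<epsilon> :: real assume eps: "\<epsilon> > 0"
  interpret prob_space P by (rule P)
  define \<delta> where "\<delta> = min (1/2) (\<epsilon> / (4 * (real r + 1)))"
  define C where "C = max 0 (\<Sum>j = 1..r. w j * phi \<delta>)"
  have d: "\<delta> \<in> {0<..<1}" using eps unfolding \<delta>_def by auto
  have "2 * real r * \<delta> \<le> 2 * real r * (\<epsilon> / (4 * (real r + 1)))"
    unfolding \<delta>_def by (intro mult_left_mono) auto
  also have "\<dots> < \<epsilon>" using eps by (simp add: field_simps add_pos_nonneg)
  finally have rd: "2 * real r * \<delta> < \<epsilon>" .
  define Wn where "Wn = (\<lambda>n \<omega>. Wstat (Mn n) psi (allT T Tb X V n \<omega>) 0)"
  define A where "A = (\<lambda>n. {\<omega> \<in> space P. \<bar>pW (Mn n) psi (allT T Tb X V n \<omega>)\<bar> > \<epsilon>})"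
  define B where "B = (\<lambda>n. {\<omega> \<in> space P. Wn n \<omega> \<le> C})"
  have incl: "A n \<subseteq> B n" for n
  proof
    fix \<omega> assume w: "\<omega> \<in> A n"
    show "\<omega> \<in> B n"
    proof (rule ccontr)
      assume "\<omega> \<notin> B n"
      hence gt: "Wn n \<omega> > C" using w unfolding A_def B_def by auto
      have "pW (Mn n) psi (allT T Tb X V n \<omega>) \<le> 2 * real r * \<delta>"
        by (rule pW_bound[OF psi_def w_pos phi_decr d, where C=C]) (use gt in \<open>auto simp: C_def Wn_def\<close>)
      moreover have "pW (Mn n) psi (allT T Tb X V n \<omega>) \<ge> 0" unfolding pW_def by simp
      ultimately show False using w rd unfolding A_def by auto
    qed
  qed
  have allT_meas: "(\<lambda>\<omega>. allT T Tb X V n \<omega> k j) \<in> borel_measurable P" for n k j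
    unfolding allT_def using T_meas Tb_meas by (cases "k = 0") auto
  have Wm: "Wn n \<in> borel_measurable P" for n
  proof -
    have "Wn n = (\<lambda>\<omega>. \<Sum>j = 1..r. w j * phi (pval (Mn n) (\<lambda>k. allT T Tb X V n \<omega> k j) (allT T Tb X V n \<omega> 0 j)))"
      unfolding Wn_def Wstat_def psi_def ..
    also have "\<dots> \<in> borel_measurable P"
      by (intro borel_measurable_sum borel_measurable_times borel_measurable_const
          phi_pval_meas allT_meas)
    finally show ?thesis .
  qed
  have Bs: "B n \<in> sets P" for n unfolding B_def using Wm by measurable
  have le: "measure P (A n) \<le> measure P (B n)" for n
  proof (cases "A n \<in> sets P")
    case True
    then show ?thesis using incl Bs by (intro finite_measure_mono) auto
  next
    case False
    then show ?thesis by (simp add: measure_notin_sets)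
  qed
  have "(\<lambda>n. measure P (B n)) \<longlonglongrightarrow> 0" using W_div[of C] unfolding B_def Wn_def .
  moreover have "\<forall>\<^sub>F n in sequentially. (\<lambda>_. 0::real) n \<le> measure P (A n)" by simp
  moreover have "\<forall>\<^sub>F n in sequentially. measure P (A n) \<le> measure P (B n)" using le by simp
  ultimately have "(\<lambda>n. measure P (A n)) \<longlonglongrightarrow> 0"
    using tendsto_sandwich[of "\<lambda>_. 0::real" "\<lambda>n. measure P (A n)" sequentially "\<lambda>n. measure P (B n)" 0]
    by simp
  thus "(\<lambda>n. measure P {\<omega> \<in> space P. \<bar>pW (Mn n) psi (allT T Tb X V n \<omega>)\<bar> > \<epsilon>}) \<longlonglongrightarrow> 0"
    unfolding A_def .
qed

end
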